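(* Let $(X,\to)$ be a finitely branching transition system over $A$. Then $\mathit{lo}_b$ is $c_b$-compatible, i.e. $\mathit{lo}_b(c_b(\mathcal S))\subseteq c_b(\mathit{lo}_b(\mathcal S))$ for all $\mathcal S\subseteq\mathcal P(X)$.
   Context: A transition system over $A$: $(X,\to)$, $\to\subseteq X\times A\times X$; finitely branching: $\{(a,x')\mid x\xrightarrow{a}x'\}$ finite for each $x$. $\Diamond_a(S)=\{x\mid\exists x'\in S\colon x\xrightarrow{a}x'\}$. $\mathit{lo}_b(\mathcal S)=\bigcup_{a\in A}\{\Diamond_a(S)\mid S\in\mathrm{cl}^{\cup,\lnot}_f(\mathcal S)\}$, where $\mathrm{cl}^{\cup,\lnot}_f(\mathcal S)$ is the closure of $\mathcal S$ under finite unions and complement. $\alpha_b(\mathcal S)=\{(x,x')\mid\forall S\in\mathcal S\colon(x\in S\iff x'\in S)\}$, $\gamma_b(R)=\{S\subseteq X\mid\forall(x,x')\in R\colon(x\in S\iff x'\in S)\}$ for equivalences $R$ on $X$, and $c_b=\gamma_b\circ\alpha_b$. *)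

theory Defs
  imports Main
begin

text \<open>A transition system over the label type 'a on the state type 'x is a
  relation T :: ('x \<times> 'a \<times> 'x) set; the state set X is UNIV :: 'x set and
  the label set A is UNIV :: 'a set.\<close>

definition finitely_branching :: "('x \<times> 'a \<times> 'x) set \<Rightarrow> bool" where
  "finitely_branching T \<longleftrightarrow> (\<forall>x. finite {(a, x'). (x, a, x') \<in> T})"

definition diamond :: "('x \<times> 'a \<times> 'x) set \<Rightarrow> 'a \<Rightarrow> 'x set \<Rightarrow> 'x set" where
  "diamond T a S = {x. \<exists>x'\<in>S. (x, a, x') \<in> T}"

inductive_set cl_union_neg :: "'x set set \<Rightarrow> 'x set set" for \<S> where
  base: "S \<in> \<S> \<Longrightarrow> S \<in> cl_union_neg \<S>"
| empty: "{} \<in> cl_union_neg \<S>"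
| union: "S1 \<in> cl_union_neg \<S> \<Longrightarrow> S2 \<in> cl_union_neg \<S> \<Longrightarrow> S1 \<union> S2 \<in> cl_union_neg \<S>"
| compl: "S \<in> cl_union_neg \<S> \<Longrightarrow> - S \<in> cl_union_neg \<S>"

definition lo_b :: "('x \<times> 'a \<times> 'x) set \<Rightarrow> 'x set set \<Rightarrow> 'x set set" where
  "lo_b T \<S> = (\<Union>a. {diamond T a S | S. S \<in> cl_union_neg \<S>})"

definition alpha_b :: "'x set set \<Rightarrow> ('x \<times> 'x) set" where
  "alpha_b \<S> = {(x, x'). \<forall>S\<in>\<S>. (x \<in> S \<longleftrightarrow> x' \<in> S)}"

definition gamma_b :: "('x \<times> 'x) set \<Rightarrow> 'x set set" where
  "gamma_b R = {S. \<forall>(x, x')\<in>R. (x \<in> S \<longleftrightarrow> x' \<in> S)}"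

definition c_b :: "'x set set \<Rightarrow> 'x set set" where
  "c_b \<S> = gamma_b (alpha_b \<S>)"

end

theory Submission
  imports Defs
begin

lemma cl_univ: "UNIV \<in> cl_union_neg S"
  using cl_union_neg.compl[OF cl_union_neg.empty] by simp

lemma cl_inter: "A \<in> cl_union_neg S \<Longrightarrow> B \<in> cl_union_neg S \<Longrightarrow> A \<inter> B \<in> cl_union_neg S"
proof -
  assume a: "A \<in> cl_union_neg S" "B \<in> cl_union_neg S"
  have "- (- A \<union> - B) \<in> cl_union_neg S"
    by (intro cl_union_neg.compl cl_union_neg.union a)
  thus ?thesis by simp
qed

lemma cl_Inter: "finite F \<Longrightarrow> F \<subseteq> cl_union_neg S \<Longrightarrow> \<Inter>F \<in> cl_union_neg S"
  by (induction F rule: finite_induct) (auto simp: cl_univ cl_inter)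

lemma key:
  assumes fb: "finitely_branching T"
    and xy: "(x, y) \<in> alpha_b (lo_b T \<S>)"
    and S: "S \<in> c_b \<S>"
    and x: "x \<in> diamond T a S"
  shows "y \<in> diamond T a S"
proof (rule ccontr)
  assume ny: "y \<notin> diamond T a S"
  obtain x' where x'S: "x' \<in> S" and tx: "(x, a, x') \<in> T" using x by (auto simp: diamond_def)
  define Y where "Y = {y'. (y, a, y') \<in> T}"
  have "Y \<subseteq> snd ` {(b, z). (y, b, z) \<in> T}" unfolding Y_def by force
  moreover have "finite {(b, z). (y, b, z) \<in> T}" using fb by (simp add: finitely_branching_def)
  ultimately have finY: "finite Y" by (meson finite_imageI finite_subset)
  have ex: "\<exists>B. B \<in> cl_union_neg \<S> \<and> x' \<in> B \<and> y' \<notin> B" if "y' \<in> Y" for y'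
  proof -
    have "y' \<notin> S" using ny that by (auto simp: Y_def diamond_def)
    hence "(x', y') \<notin> alpha_b \<S>" using S x'S by (auto simp: c_b_def gamma_b_def)
    then obtain S' where S': "S' \<in> \<S>" "(x' \<in> S') \<noteq> (y' \<in> S')" by (auto simp: alpha_b_def)
    show ?thesis
    proof (cases "x' \<in> S'")
      case True thus ?thesis using S' cl_union_neg.base by blast
    next
      case False thus ?thesis using S' cl_union_neg.base cl_union_neg.compl
        by (metis ComplI Compl_iff)
    qed
  qed
  define B where "B y' = (SOME B. B \<in> cl_union_neg \<S> \<and> x' \<in> B \<and> y' \<notin> B)" for y'
  have Bp: "B y' \<in> cl_union_neg \<S> \<and> x' \<in> B y' \<and> y' \<notin> B y'" if "y' \<in> Y" for y'
    unfolding B_def using someI_ex[OF ex[OF that]] .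
  define D where "D = \<Inter>(B ` Y)"
  have Dcl: "D \<in> cl_union_neg \<S>" unfolding D_def
    by (rule cl_Inter) (use finY Bp in auto)
  have "x' \<in> D" using Bp by (auto simp: D_def)
  hence xD: "x \<in> diamond T a D" using tx by (auto simp: diamond_def)
  have "diamond T a D \<in> lo_b T \<S>" using Dcl by (auto simp: lo_b_def)
  hence "y \<in> diamond T a D" using xy xD by (auto simp: alpha_b_def)
  then obtain y' where "y' \<in> D" "(y, a, y') \<in> T" by (auto simp: diamond_def)
  thus False using Bp by (auto simp: D_def Y_def)
qed

lemma cl_c_b: "cl_union_neg (c_b \<S>) = c_b \<S>"
proof
  show "cl_union_neg (c_b \<S>) \<subseteq> c_b \<S>"
  proof
    fix S assume "S \<in> cl_union_neg (c_b \<S>)"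
    thus "S \<in> c_b \<S>"
      by induction (auto simp: c_b_def gamma_b_def)
  qed
qed (auto intro: cl_union_neg.base)

theorem mainTheorem9:
  fixes T :: "('x \<times> 'a \<times> 'x) set" and \<S> :: "'x set set"
  assumes "finitely_branching T"
  shows "lo_b T (c_b \<S>) \<subseteq> c_b (lo_b T \<S>)"
proof
  fix U assume "U \<in> lo_b T (c_b \<S>)"
  then obtain a S where U: "U = diamond T a S" and S: "S \<in> c_b \<S>"
    by (auto simp: lo_b_def cl_c_b)
  have sym: "(y, x) \<in> alpha_b (lo_b T \<S>)" if "(x, y) \<in> alpha_b (lo_b T \<S>)" for x y
    using that by (auto simp: alpha_b_def)
  show "U \<in> c_b (lo_b T \<S>)"
    unfolding c_b_def gamma_b_def U
    using key[OF assms _ S] sym by blast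
qed

end
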